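(* There exists a constant $C>0$, depending only on $d$, such that for almost every IET $(\pi,\lambda)$ and every $n\in\mathbb N$, $$\big\|P_{\ker\Omega_{\pi^{(n)}}}\circ Z_{0,n}(\pi,\lambda)\big\|\le C.$$ Moreover, if $\pi^{(n)}=\pi$ for some $n$, then $P_{\ker\Omega_{\pi}}\circ Z_{0,n}(\pi,\lambda)=P_{\ker\Omega_{\pi}}$.
   Context: IETs $(\pi,\lambda)$ are on the alphabet $\mathcal A$ with $d\ge2$ letters. Here $\pi=(\pi_0,\pi_1)$ is irreducible and $\lambda$ is a normalized length vector. $(\pi^{(n)},\lambda^{(n)})$ denotes the $n$-th iterate under the Zorich acceleration of Rauzy–Veech induction. $Z_{0,n}(\pi,\lambda)\in SL(d,\mathbb Z)$ is the corresponding height (Zorich) cocycle product, satisfying $q^{(n)}=Z_{0,n}q^{(0)}$ for the return-time vectors. $\Omega_\pi$ is the antisymmetric matrix with - $(\Omega_\pi)_{\alpha\beta}=1$ if $\pi_1(\alpha)>\pi_1(\beta)$ and $\pi_0(\alpha)<\pi_0(\beta)$, - $(\Omega_\pi)_{\alpha\beta}=-1$ if $\pi_1(\alpha)<\pi_1(\beta)$ and $\pi_0(\alpha)>\pi_0(\beta)$, - $(\Omega_\pi)_{\alpha\beta}=0$ otherwise. $P_W$ denotes the orthogonal projection of $\mathbb R^{\mathcal A}$ onto a subspace $W$. *)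

theory Defs
  imports "HOL-Analysis.Analysis"
begin

text \<open>Interval exchange transformations on a finite alphabet 'a (d = CARD('a)).
A permutation datum is a pair (p0, p1) of bijections 'a -> {1..d}
(position of a letter in the top row, resp. bottom row).\<close>

type_synonym 'a perm_datum = "('a \<Rightarrow> nat) \<times> ('a \<Rightarrow> nat)"

definition row_ok :: "('a::finite \<Rightarrow> nat) \<Rightarrow> bool" where
  "row_ok p \<longleftrightarrow> bij_betw p UNIV {1..CARD('a)}"

definition irreducible_perm :: "'a::finite perm_datum \<Rightarrow> bool" where
  "irreducible_perm ip \<longleftrightarrow> row_ok (fst ip) \<and> row_ok (snd ip) \<and>
     (\<forall>k\<in>{1..<CARD('a)}. {a. fst ip a \<le> k} \<noteq> {a. snd ip a \<le> k})"

definition last_letter :: "('a::finite \<Rightarrow> nat) \<Rightarrow> 'a" where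
  "last_letter p = (THE a. p a = CARD('a))"

text \<open>Type of the Rauzy--Veech step: True = top type (top last interval longer).\<close>
definition rv_top :: "'a::finite perm_datum \<times> (real^'a) \<Rightarrow> bool" where
  "rv_top x = (snd x $ last_letter (fst (fst x)) > snd x $ last_letter (snd (fst x)))"

definition rv_winner :: "'a::finite perm_datum \<times> (real^'a) \<Rightarrow> 'a" where
  "rv_winner x = (if rv_top x then last_letter (fst (fst x)) else last_letter (snd (fst x)))"

definition rv_loser :: "'a::finite perm_datum \<times> (real^'a) \<Rightarrow> 'a" where
  "rv_loser x = (if rv_top x then last_letter (snd (fst x)) else last_letter (fst (fst x)))"

text \<open>Rauzy move of a row: the loser is moved right after the winner in the loser's row.\<close>
definition move_row :: "('a \<Rightarrow> nat) \<Rightarrow> 'a \<Rightarrow> 'a \<Rightarrow> ('a \<Rightarrow> nat)" where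
  "move_row p w l = (\<lambda>a. if p a \<le> p w then p a else if a = l then p w + 1 else p a + 1)"

definition normalize_len :: "real^'a::finite \<Rightarrow> real^'a" where
  "normalize_len v = (1 / (\<Sum>a\<in>UNIV. v $ a)) *\<^sub>R v"

definition rv_step :: "'a::finite perm_datum \<times> (real^'a) \<Rightarrow> 'a perm_datum \<times> (real^'a)" where
  "rv_step x =
    (let ip = fst x; v = snd x; w = rv_winner x; l = rv_loser x;
         ip' = (if rv_top x then (fst ip, move_row (snd ip) w l)
                else (move_row (fst ip) w l, snd ip));
         v' = (\<chi> b. if b = w then v $ w - v $ l else v $ b)
     in (ip', normalize_len v'))"

definition rv_iter :: "'a::finite perm_datum \<Rightarrow> real^'a \<Rightarrow> nat \<Rightarrow> 'a perm_datum \<times> (real^'a)" where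
  "rv_iter ip v n = (rv_step ^^ n) (ip, normalize_len v)"

text \<open>Rauzy--Veech height matrix of one step: q' = A q, i.e. q'_loser = q_loser + q_winner.\<close>
definition rv_matrix :: "'a::finite perm_datum \<times> (real^'a) \<Rightarrow> real^'a^'a" where
  "rv_matrix x = (\<chi> i j. (if i = j then 1 else 0) +
                         (if i = rv_loser x \<and> j = rv_winner x then 1 else 0))"

primrec rv_cocycle :: "'a::finite perm_datum \<Rightarrow> real^'a \<Rightarrow> nat \<Rightarrow> real^'a^'a" where
  "rv_cocycle ip v 0 = mat 1"
| "rv_cocycle ip v (Suc n) = rv_matrix (rv_iter ip v n) ** rv_cocycle ip v n"

text \<open>Zorich times: the k-th Zorich iterate is the n_k-th Rauzy--Veech iterate, where a
Zorich step groups a maximal block of consecutive Rauzy--Veech steps of the same type.\<close>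
primrec zorich_time :: "'a::finite perm_datum \<Rightarrow> real^'a \<Rightarrow> nat \<Rightarrow> nat" where
  "zorich_time ip v 0 = 0"
| "zorich_time ip v (Suc k) =
     (LEAST m. m > zorich_time ip v k \<and>
        rv_top (rv_iter ip v m) \<noteq> rv_top (rv_iter ip v (zorich_time ip v k)))"

definition zorich_iter :: "'a::finite perm_datum \<Rightarrow> real^'a \<Rightarrow> nat \<Rightarrow> 'a perm_datum \<times> (real^'a)" where
  "zorich_iter ip v k = rv_iter ip v (zorich_time ip v k)"

definition zorich_cocycle :: "'a::finite perm_datum \<Rightarrow> real^'a \<Rightarrow> nat \<Rightarrow> real^'a^'a" where
  "zorich_cocycle ip v k = rv_cocycle ip v (zorich_time ip v k)"

definition Omega :: "'a::finite perm_datum \<Rightarrow> real^'a^'a" where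
  "Omega ip = (\<chi> a b.
     if snd ip a > snd ip b \<and> fst ip a < fst ip b then 1
     else if snd ip a < snd ip b \<and> fst ip a > fst ip b then -1 else 0)"

definition mat_kernel :: "real^'a::finite^'a \<Rightarrow> (real^'a) set" where
  "mat_kernel M = {x. M *v x = 0}"

definition orth_proj :: "(real^'a::finite) set \<Rightarrow> real^'a \<Rightarrow> real^'a" where
  "orth_proj W x = (THE y. y \<in> W \<and> (\<forall>w\<in>W. (x - y) \<bullet> w = 0))"

end

theory Submission imports Defs begin

definition PS :: "('a::finite \<Rightarrow> nat) \<Rightarrow> real^'a \<Rightarrow> nat \<Rightarrow> real" where
  "PS p x k = sum (\<lambda>b. x$b) {b. p b < k}"

definition kc :: "'a::finite perm_datum \<Rightarrow> real^'a \<Rightarrow> bool" where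
  "kc ip x \<longleftrightarrow> (\<forall>a. PS (fst ip) x (fst ip a) = PS (snd ip) x (snd ip a))"

lemma row_ok_iff:
  "row_ok (p::'a::finite \<Rightarrow> nat) \<longleftrightarrow> inj p \<and> (\<forall>a. 1 \<le> p a \<and> p a \<le> CARD('a))"
proof
  assume "row_ok p" thus "inj p \<and> (\<forall>a. 1 \<le> p a \<and> p a \<le> CARD('a))"
    unfolding row_ok_def bij_betw_def by auto
next
  assume h: "inj p \<and> (\<forall>a. 1 \<le> p a \<and> p a \<le> CARD('a))"
  have "p ` UNIV \<subseteq> {1..CARD('a)}" using h by auto
  moreover have "card (p ` UNIV) = card {1..CARD('a)}"
    using h by (simp add: card_image)
  ultimately have "p ` UNIV = {1..CARD('a)}" by (simp add: card_subset_eq)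
  thus "row_ok p" unfolding row_ok_def bij_betw_def using h by auto
qed

lemma row_ok_surj:
  assumes "row_ok (p::'a::finite \<Rightarrow> nat)" "1 \<le> k" "k \<le> CARD('a)"
  shows "\<exists>a. p a = k"
  using assms unfolding row_ok_def bij_betw_def by (metis atLeastAtMost_iff imageE)

lemma last_letter_eq:
  assumes "row_ok (p::'a::finite \<Rightarrow> nat)"
  shows "p (last_letter p) = CARD('a)"
proof -
  obtain a where a: "p a = CARD('a)" using row_ok_surj[OF assms, of "CARD('a)"] by auto
  have inj: "inj p" using assms row_ok_iff by blast
  have "last_letter p = a" unfolding last_letter_def
    by (rule the_equality) (use a inj in \<open>metis injD\<close>)+
  thus ?thesis using a by simp
qed

lemma move_row_ok:
  assumes rq: "row_ok (q::'a::finite \<Rightarrow> nat)" and ql: "q l = CARD('a)"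
  shows "row_ok (move_row q w l)"
proof (cases "w = l")
  case True
  have "move_row q w l = q" using True ql rq unfolding move_row_def row_ok_iff by (auto simp: fun_eq_iff)
  thus ?thesis using rq by simp
next
  case False
  have inj: "inj q" and rng: "\<And>a. 1 \<le> q a \<and> q a \<le> CARD('a)" using rq row_ok_iff by blast+
  have qw: "q w < CARD('a)" using False ql inj rng by (metis injD le_neq_implies_less)
  have lt: "\<And>a. a \<noteq> l \<Longrightarrow> q a < CARD('a)" using ql inj rng by (metis injD le_neq_implies_less)
  have injm: "inj (move_row q w l)"
  proof (rule injI)
    fix a b assume "move_row q w l a = move_row q w l b"
    hence h: "(if q a \<le> q w then q a else if a = l then q w + 1 else q a + 1) =
        (if q b \<le> q w then q b else if b = l then q w + 1 else q b + 1)" unfolding move_row_def .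
    have "q a = q b \<or> a = b"
      using h by (simp split: if_splits)
    thus "a = b" using inj by (auto dest: injD)
  qed
  have rngm: "1 \<le> move_row q w l a \<and> move_row q w l a \<le> CARD('a)" for a
  proof (cases "a = l")
    case True thus ?thesis using qw rng[of a] unfolding move_row_def by auto
  next
    case False thus ?thesis using rng[of a] lt[OF False] unfolding move_row_def by auto
  qed
  show ?thesis unfolding row_ok_iff using injm rngm by blast
qed

lemma PS_sum: "PS p x k = (\<Sum>b\<in>UNIV. if p b < k then x$b else 0)"
  unfolding PS_def by (simp add: sum.If_cases)

lemma ker_char:
  assumes r0: "row_ok (fst ip)" and r1: "row_ok (snd ip)"
  shows "Omega ip *v x = 0 \<longleftrightarrow> kc (ip::'a::finite perm_datum) x"
proof -
  have i0: "inj (fst ip)" and i1: "inj (snd ip)" using r0 r1 row_ok_iff by blast+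
  have comp: "(Omega ip *v x)$a = PS (snd ip) x (snd ip a) - PS (fst ip) x (fst ip a)" for a
  proof -
    have "(Omega ip *v x)$a = (\<Sum>b\<in>UNIV. Omega ip $ a $ b * x$b)"
      by (simp add: matrix_vector_mult_def)
    also have "\<dots> = (\<Sum>b\<in>UNIV. (if snd ip b < snd ip a then x$b else 0) - (if fst ip b < fst ip a then x$b else 0))"
    proof (rule sum.cong)
      fix b
      show "Omega ip $ a $ b * x$b = (if snd ip b < snd ip a then x$b else 0) - (if fst ip b < fst ip a then x$b else 0)"
      proof (cases "b = a")
        case True thus ?thesis by (simp add: Omega_def)
      next
        case False
        hence "fst ip b \<noteq> fst ip a" "snd ip b \<noteq> snd ip a" using i0 i1 by (auto dest: injD)
        thus ?thesis by (auto simp add: Omega_def)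
      qed
    qed simp
    also have "\<dots> = PS (snd ip) x (snd ip a) - PS (fst ip) x (fst ip a)"
      by (simp add: PS_sum sum_subtractf)
    finally show ?thesis .
  qed
  show ?thesis unfolding kc_def vec_eq_iff comp by auto
qed

lemma transpose_rv_matrix:
  "transpose (rv_matrix x) *v u = (\<chi> b. u$b + (if b = rv_winner x then u $ rv_loser x else 0))"
proof -
  have "(transpose (rv_matrix x) *v u) $ j = u$j + (if j = rv_winner x then u $ rv_loser x else 0)" for j
  proof -
    have "(transpose (rv_matrix x) *v u) $ j =
       (\<Sum>i\<in>UNIV. ((if i = j then 1 else 0) + (if i = rv_loser x \<and> j = rv_winner x then 1 else 0)) * u$i)"
      by (simp add: matrix_vector_mult_def transpose_def rv_matrix_def)
    also have "\<dots> = (\<Sum>i\<in>UNIV. (if i = j then u$i else 0)) + (\<Sum>i\<in>UNIV. (if i = rv_loser x \<and> j = rv_winner x then u$i else 0))"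
      by (subst sum.distrib[symmetric], rule sum.cong, auto)
    also have "\<dots> = u$j + (if j = rv_winner x then u $ rv_loser x else 0)"
      by (auto simp: sum.delta sum.delta')
    finally show ?thesis .
  qed
  thus ?thesis by (simp add: vec_eq_iff)
qed

lemma PS_add_axis:
  "PS r (\<chi> b. u$b + (if b = w then c else 0)) k = PS r u k + (if r w < k then c else 0)"
  unfolding PS_def by (simp add: sum.distrib sum.delta)

lemma PS_top:
  assumes "row_ok (q::'a::finite \<Rightarrow> nat)" "q l = CARD('a)"
  shows "PS q u (CARD('a)) = sum (\<lambda>b. u$b) UNIV - u$l"
proof -
  have i: "inj q" and r: "\<And>a. 1 \<le> q a \<and> q a \<le> CARD('a)" using assms(1) row_ok_iff by blast+
  have "{b. q b < CARD('a)} = UNIV - {l}"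
    using i r assms(2) by (auto dest: injD, metis injD le_neq_implies_less)
  thus ?thesis unfolding PS_def by (simp add: sum.remove[of UNIV l])
qed

lemma step_gen:
  fixes p q :: "'a::finite \<Rightarrow> nat"
  assumes rp: "row_ok p" and rq: "row_ok q" and pw: "p w = CARD('a)" and ql: "q l = CARD('a)"
    and hu: "\<And>a. PS p u (p a) = PS (move_row q w l) u (move_row q w l a)"
    and lam: "lam = (\<chi> b. u$b + (if b = w then u$l else 0))"
  shows "PS p lam (p a) = PS p u (p a)" and "PS q lam (q a) = PS p u (p a)"
proof -
  have ip: "inj p" and rngp: "\<And>a. 1 \<le> p a \<and> p a \<le> CARD('a)" using rp row_ok_iff by blast+
  have iq: "inj q" and rngq: "\<And>a. 1 \<le> q a \<and> q a \<le> CARD('a)" using rq row_ok_iff by blast+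
  show "PS p lam (p a) = PS p u (p a)"
    using rngp[of a] pw unfolding lam PS_add_axis by simp
  show "PS q lam (q a) = PS p u (p a)"
  proof (cases "w = l")
    case True
    have "move_row q w l = q" using True ql rngq unfolding move_row_def by (auto simp: fun_eq_iff)
    hence "PS p u (p a) = PS q u (q a)" using hu[of a] by simp
    thus ?thesis using True ql rngq[of a] unfolding lam PS_add_axis by simp
  next
    case False
    define q' where "q' = move_row q w l"
    have qw: "q w < CARD('a)" using False ql iq rngq by (metis injD le_neq_implies_less)
    have lt: "\<And>a. a \<noteq> l \<Longrightarrow> q a < CARD('a)" using ql iq rngq by (metis injD le_neq_implies_less)
    have low: "{b. q' b < q a} = {b. q b < q a}" if "q a \<le> q w" for a
      using that unfolding q'_def move_row_def by auto
    have hu': "PS p u (p a) = PS q' u (q' a)" for a using hu q'_def by simp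
    show ?thesis
    proof (cases "q a \<le> q w")
      case True
      have "q' a = q a" using True unfolding q'_def move_row_def by simp
      hence "PS p u (p a) = PS q u (q a)" using hu'[of a] low[OF True] unfolding PS_def by simp
      thus ?thesis using True unfolding lam PS_add_axis by simp
    next
      case c2: False
      show ?thesis
      proof (cases "a = l")
        case True
        have "PS q lam (q a) = sum (\<lambda>b. u$b) UNIV"
          using True ql qw PS_top[OF rq ql, of u] unfolding lam PS_add_axis by simp
        moreover have "PS p u (p a) = sum (\<lambda>b. u$b) UNIV"
        proof -
          have "q' l = q w + 1" using False unfolding q'_def move_row_def using qw by (simp add: ql)
          hence e1: "PS p u (p a) = PS q' u (q w + 1)" using hu'[of a] True by simp
          have "{b. q' b < q w + 1} = insert w {b. q b < q w}"
            unfolding q'_def move_row_def using iq qw ql by (auto split: if_splits dest: injD simp: le_neq_implies_less, metis injD le_neq_implies_less)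
          hence "PS q' u (q w + 1) = u$w + PS q u (q w)" unfolding PS_def by simp
          also have "PS q u (q w) = PS q' u (q' w)"
            using low[of w] unfolding PS_def q'_def move_row_def by simp
          also have "\<dots> = PS p u (p w)" using hu' by simp
          also have "\<dots> = sum (\<lambda>b. u$b) UNIV - u$w" using PS_top[OF rp pw] pw by simp
          finally show ?thesis using e1 by simp
        qed
        ultimately show ?thesis by simp
      next
        case False
        have "q' a = q a + 1" using False c2 unfolding q'_def move_row_def by simp
        moreover have "{b. q' b < q a + 1} = insert l {b. q b < q a}"
          using c2 unfolding q'_def move_row_def by (auto split: if_splits)
        moreover have "l \<notin> {b. q b < q a}" using lt[OF False] ql by simp
        ultimately have "PS q' u (q' a) = u$l + PS q u (q a)" unfolding PS_def by simp
        thus ?thesis using hu'[of a] c2 unfolding lam PS_add_axis by simp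
      qed
    qed
  qed
qed

lemma fst_rv_step:
  "fst (rv_step x) = (if rv_top x then (fst (fst x), move_row (snd (fst x)) (rv_winner x) (rv_loser x))
                      else (move_row (fst (fst x)) (rv_winner x) (rv_loser x), snd (fst x)))"
  by (simp add: rv_step_def Let_def)

lemma rows_step:
  assumes "row_ok (fst (fst x))" "row_ok (snd (fst x))"
  shows "row_ok (fst (fst (rv_step x))) \<and> row_ok (snd (fst (rv_step x)))"
  using assms move_row_ok[OF assms(2) last_letter_eq[OF assms(2)]]
    move_row_ok[OF assms(1) last_letter_eq[OF assms(1)]]
  unfolding fst_rv_step rv_loser_def by auto

lemma one_step:
  assumes r0: "row_ok (fst (fst x))" and r1: "row_ok (snd (fst x))"
    and hk: "kc (fst (rv_step x)) u"
  shows "kc (fst x) (transpose (rv_matrix x) *v u) \<and>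
    (\<forall>a. PS (fst (fst x)) (transpose (rv_matrix x) *v u) (fst (fst x) a)
        = PS (fst (fst (rv_step x))) u (fst (fst (rv_step x)) a))"
proof -
  define p0 where "p0 = fst (fst x)"
  define p1 where "p1 = snd (fst x)"
  define lam where "lam = transpose (rv_matrix x) *v u"
  have lam': "lam = (\<chi> b. u$b + (if b = rv_winner x then u $ rv_loser x else 0))"
    unfolding lam_def transpose_rv_matrix ..
  have l0: "p0 (last_letter p0) = CARD('a)" using last_letter_eq r0 p0_def by blast
  have l1: "p1 (last_letter p1) = CARD('a)" using last_letter_eq r1 p1_def by blast
  show ?thesis
  proof (cases "rv_top x")
    case True
    have w: "rv_winner x = last_letter p0" and l: "rv_loser x = last_letter p1"
      using True by (simp_all add: rv_winner_def rv_loser_def p0_def p1_def)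
    have fs: "fst (rv_step x) = (p0, move_row p1 (last_letter p0) (last_letter p1))"
      using True w l unfolding fst_rv_step p0_def p1_def by simp
    have hu: "PS p0 u (p0 a) = PS (move_row p1 (last_letter p0) (last_letter p1)) u
          (move_row p1 (last_letter p0) (last_letter p1) a)" for a
      using hk unfolding kc_def fs by simp
    note sg = step_gen[of p0 p1 "last_letter p0" "last_letter p1" u lam, OF r0[folded p0_def] r1[folded p1_def] l0 l1 hu lam'[unfolded w l]]
    show ?thesis unfolding kc_def lam_def[symmetric] fs using sg by (simp add: p0_def p1_def)
  next
    case False
    have w: "rv_winner x = last_letter p1" and l: "rv_loser x = last_letter p0"
      using False by (simp_all add: rv_winner_def rv_loser_def p0_def p1_def)
    have fs: "fst (rv_step x) = (move_row p0 (last_letter p1) (last_letter p0), p1)"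
      using False w l unfolding fst_rv_step p0_def p1_def by simp
    have hu: "PS p1 u (p1 a) = PS (move_row p0 (last_letter p1) (last_letter p0)) u
          (move_row p0 (last_letter p1) (last_letter p0) a)" for a
      using hk unfolding kc_def fs by simp
    note sg = step_gen[of p1 p0 "last_letter p1" "last_letter p0" u lam, OF r1[folded p1_def] r0[folded p0_def] l1 l0 hu lam'[unfolded w l]]
    show ?thesis unfolding kc_def lam_def[symmetric] fs using sg hu by (simp add: p0_def p1_def)
  qed
qed

lemma rows_iter:
  assumes "row_ok (fst ip)" "row_ok (snd ip)"
  shows "row_ok (fst (fst (rv_iter ip v n))) \<and> row_ok (snd (fst (rv_iter ip v n)))"
proof (induction n)
  case 0 thus ?case using assms by (simp add: rv_iter_def)
next
  case (Suc n)
  have "rv_iter ip v (Suc n) = rv_step (rv_iter ip v n)" by (simp add: rv_iter_def)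
  thus ?case using rows_step Suc by metis
qed

lemma chain:
  assumes r0: "row_ok (fst ip)" and r1: "row_ok (snd ip)"
  shows "kc (fst (rv_iter ip v n)) u \<Longrightarrow>
    kc ip (transpose (rv_cocycle ip v n) *v u) \<and>
    (\<forall>a. PS (fst ip) (transpose (rv_cocycle ip v n) *v u) (fst ip a)
        = PS (fst (fst (rv_iter ip v n))) u (fst (fst (rv_iter ip v n)) a))"
proof (induction n arbitrary: u)
  case 0 thus ?case by (simp add: rv_iter_def)
next
  case (Suc n)
  let ?x = "rv_iter ip v n"
  have it: "rv_iter ip v (Suc n) = rv_step ?x" by (simp add: rv_iter_def)
  have rr: "row_ok (fst (fst ?x))" "row_ok (snd (fst ?x))" using rows_iter[OF r0 r1] by blast+
  have os: "kc (fst ?x) (transpose (rv_matrix ?x) *v u) \<and> (\<forall>a. PS (fst (fst ?x)) (transpose (rv_matrix ?x) *v u) (fst (fst ?x) a) = PS (fst (fst (rv_step ?x))) u (fst (fst (rv_step ?x)) a))"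
    using one_step[OF rr, of u] Suc.prems it by simp
  have tr: "transpose (rv_cocycle ip v (Suc n)) *v u = transpose (rv_cocycle ip v n) *v (transpose (rv_matrix ?x) *v u)"
    by (simp only: rv_cocycle.simps matrix_transpose_mul matrix_vector_mul_assoc)
  have "kc (fst ?x) (transpose (rv_matrix ?x) *v u)" using os by blast
  note ih = Suc.IH[OF this]
  show ?case unfolding tr using ih os it by simp
qed

lemma PS_succ:
  assumes "row_ok (p::'a::finite \<Rightarrow> nat)" "p a < CARD('a)"
  shows "\<exists>c. PS p x (p c) = x$a + PS p x (p a)"
proof -
  obtain c where c: "p c = p a + 1" using row_ok_surj[OF assms(1), of "p a + 1"] assms(2) by auto
  have "{b. p b < p a + 1} = insert a {b. p b < p a}"
    using assms(1) unfolding row_ok_iff by (auto simp: less_Suc_eq inj_eq)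
  hence "PS p x (p c) = x$a + PS p x (p a)" unfolding PS_def c by simp
  thus ?thesis by blast
qed

lemma not_both_last:
  assumes irr: "irreducible_perm (ip::'a::finite perm_datum)" and card: "CARD('a) \<ge> 2"
    and h0: "fst ip a = CARD('a)"
  shows "snd ip a < CARD('a)"
proof (rule ccontr)
  assume "\<not> snd ip a < CARD('a)"
  hence h1: "snd ip a = CARD('a)" using irr unfolding irreducible_perm_def row_ok_iff by (meson le_neq_implies_less)
  have r0: "row_ok (fst ip)" and r1: "row_ok (snd ip)" using irr irreducible_perm_def by blast+
  have e: "{b. p b \<le> CARD('a) - 1} = UNIV - {a}" if rp: "row_ok p" and hp: "p a = CARD('a)" for p :: "'a \<Rightarrow> nat"
  proof -
    have ip: "inj p" and rg: "\<And>b. p b \<le> CARD('a)" using rp unfolding row_ok_iff by auto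
    have "p b \<le> CARD('a) - 1 \<longleftrightarrow> b \<noteq> a" for b
    proof (cases "b = a")
      case True thus ?thesis using hp card by simp
    next
      case False
      hence "p b \<noteq> p a" using ip by (auto dest: injD)
      thus ?thesis using rg[of b] hp False by simp
    qed
    thus ?thesis by auto
  qed
  have e0: "{b. fst ip b \<le> CARD('a) - 1} = UNIV - {a}" using e[OF r0 h0] .
  have e1: "{b. snd ip b \<le> CARD('a) - 1} = UNIV - {a}" using e[OF r1 h1] .
  have mem: "CARD('a) - 1 \<in> {1..<CARD('a)}" using card by auto
  have "{x. fst ip x \<le> CARD('a) - 1} \<noteq> {x. snd ip x \<le> CARD('a) - 1}"
    using irr mem unfolding irreducible_perm_def by blast
  thus False using e0 e1 by simp
qed

lemma kc_bound:
  assumes irr: "irreducible_perm (ip::'a::finite perm_datum)" and card: "CARD('a) \<ge> 2"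
    and k: "kc ip lam"
  shows "\<bar>lam$a\<bar> \<le> 2 * (\<Sum>b\<in>UNIV. \<bar>PS (fst ip) lam (fst ip b)\<bar>)"
proof -
  define N where "N = (\<Sum>b\<in>UNIV. \<bar>PS (fst ip) lam (fst ip b)\<bar>)"
  have r0: "row_ok (fst ip)" and r1: "row_ok (snd ip)" using irr irreducible_perm_def by blast+
  have b0: "\<bar>PS (fst ip) lam (fst ip b)\<bar> \<le> N" for b
    unfolding N_def by (rule member_le_sum) auto
  have b1: "\<bar>PS (snd ip) lam (snd ip b)\<bar> \<le> N" for b
    using b0[of b] k unfolding kc_def by simp
  show ?thesis
  proof (cases "fst ip a < CARD('a)")
    case True
    then obtain c where "PS (fst ip) lam (fst ip c) = lam$a + PS (fst ip) lam (fst ip a)"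
      using PS_succ[OF r0] by blast
    thus ?thesis using b0[of c] b0[of a] unfolding N_def[symmetric] by linarith
  next
    case False
    hence "fst ip a = CARD('a)" using r0 unfolding row_ok_iff by (meson le_neq_implies_less)
    hence "snd ip a < CARD('a)" using not_both_last[OF irr card] by blast
    then obtain c where "PS (snd ip) lam (snd ip c) = lam$a + PS (snd ip) lam (snd ip a)"
      using PS_succ[OF r1] by blast
    thus ?thesis using b1[of c] b1[of a] unfolding N_def[symmetric] by linarith
  qed
qed

lemma PS_le: "\<bar>PS p x k\<bar> \<le> real CARD('a) * norm (x::real^'a::finite)"
proof -
  have "\<bar>PS p x k\<bar> \<le> (\<Sum>b\<in>{b. p b < k}. \<bar>x$b\<bar>)" unfolding PS_def by (rule sum_abs)
  also have "\<dots> \<le> (\<Sum>b\<in>UNIV. \<bar>x$b\<bar>)" by (rule sum_mono2) auto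
  also have "\<dots> \<le> (\<Sum>b\<in>(UNIV::'a set). norm x)" by (rule sum_mono, simp add: component_le_norm_cart)
  finally show ?thesis by simp
qed


lemma subspace_ker: "subspace (mat_kernel (M::real^'a::finite^'a))"
  unfolding mat_kernel_def subspace_def
  by (simp add: matrix_vector_right_distrib matrix_vector_mult_scaleR)

lemma proj_props:
  assumes "subspace (W::(real^'a::finite) set)"
  shows "orth_proj W x \<in> W \<and> (\<forall>w\<in>W. (x - orth_proj W x) \<bullet> w = 0)"
proof -
  have sp: "span W = W" using assms by (simp add: span_eq_iff)
  obtain y z where y: "y \<in> span W" and z: "\<And>w. w \<in> span W \<Longrightarrow> orthogonal z w" and xyz: "x = y + z"
  proof (rule orthogonal_subspace_decomp_exists[of W x])
    fix y z assume "y \<in> span W" "\<And>w. w \<in> span W \<Longrightarrow> orthogonal z w" "x = y + z"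
    then show thesis by (rule that)
  qed
  have xy: "x - y = z" using xyz by simp
  have zW: "\<forall>w\<in>W. z \<bullet> w = 0" using z unfolding sp orthogonal_def by blast
  have P: "y \<in> W \<and> (\<forall>w\<in>W. (x - y) \<bullet> w = 0)"
    using y sp xy zW by simp
  have U: "y' = y" if "y' \<in> W \<and> (\<forall>w\<in>W. (x - y') \<bullet> w = 0)" for y'
  proof -
    have d: "y - y' \<in> W" using subspace_diff[OF assms] that P by blast
    have "(x - y') \<bullet> (y - y') - (x - y) \<bullet> (y - y') = 0" using that P d by simp
    moreover have "(y - y') \<bullet> (y - y') = (x - y') \<bullet> (y - y') - (x - y) \<bullet> (y - y')"
      by (simp only: inner_diff_left)
    ultimately have "(y - y') \<bullet> (y - y') = 0" by simp
    thus ?thesis by simp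
  qed
  have "orth_proj W x = y" unfolding orth_proj_def
    by (rule the_equality[where P="\<lambda>y. y \<in> W \<and> (\<forall>w\<in>W. (x - y) \<bullet> w = 0)", OF P U])
  thus ?thesis using P by simp
qed

lemma proj_unique:
  assumes "subspace (W::(real^'a::finite) set)" "y \<in> W" "\<forall>w\<in>W. (x - y) \<bullet> w = 0"
  shows "orth_proj W x = y"
proof -
  have P: "orth_proj W x \<in> W \<and> (\<forall>w\<in>W. (x - orth_proj W x) \<bullet> w = 0)" using proj_props[OF assms(1)] .
  define y' where "y' = orth_proj W x"
  have d: "y - y' \<in> W" using subspace_diff[OF assms(1)] assms(2) P y'_def by blast
  have "(x - y') \<bullet> (y - y') - (x - y) \<bullet> (y - y') = 0" using assms P d y'_def by simp
  moreover have "(y - y') \<bullet> (y - y') = (x - y') \<bullet> (y - y') - (x - y) \<bullet> (y - y')"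
    by (simp only: inner_diff_left)
  ultimately have "(y - y') \<bullet> (y - y') = 0" by simp
  thus ?thesis using y'_def by simp
qed

lemma inner_mat: "(Z *v x) \<bullet> k = x \<bullet> (transpose Z *v (k::real^'a::finite))"
  using dot_lmul_matrix[of x "transpose Z" k] by simp


lemma ZT_bound:
  assumes irr: "irreducible_perm (ip::'a::finite perm_datum)" and card: "CARD('a) \<ge> 2"
    and k: "k \<in> mat_kernel (Omega (fst (rv_iter ip v m)))"
  shows "norm (transpose (rv_cocycle ip v m) *v k) \<le> 2 * real CARD('a) ^ 3 * norm k"
proof -
  have r0: "row_ok (fst ip)" and r1: "row_ok (snd ip)" using irr irreducible_perm_def by blast+
  have rr: "row_ok (fst (fst (rv_iter ip v m)))" "row_ok (snd (fst (rv_iter ip v m)))"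
    using rows_iter[OF r0 r1] by blast+
  have kk: "kc (fst (rv_iter ip v m)) k" using k ker_char[OF rr] unfolding mat_kernel_def by blast
  define lam where "lam = transpose (rv_cocycle ip v m) *v k"
  have ch: "kc ip lam" "\<And>a. PS (fst ip) lam (fst ip a) = PS (fst (fst (rv_iter ip v m))) k (fst (fst (rv_iter ip v m)) a)"
    using chain[OF r0 r1 kk] lam_def by auto
  have N: "(\<Sum>b\<in>UNIV. \<bar>PS (fst ip) lam (fst ip b)\<bar>) \<le> real CARD('a) * (real CARD('a) * norm k)"
  proof -
    have "(\<Sum>b\<in>UNIV. \<bar>PS (fst ip) lam (fst ip b)\<bar>) \<le> (\<Sum>b\<in>(UNIV::'a set). real CARD('a) * norm k)"
      by (rule sum_mono) (simp add: ch(2) PS_le)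
    thus ?thesis by simp
  qed
  have ca: "\<bar>lam$a\<bar> \<le> 2 * (real CARD('a) * (real CARD('a) * norm k))" for a
    using kc_bound[OF irr card ch(1), of a] N by linarith
  have "norm lam \<le> (\<Sum>a\<in>UNIV. \<bar>lam$a\<bar>)" by (rule norm_le_l1_cart)
  also have "\<dots> \<le> (\<Sum>a\<in>(UNIV::'a set). 2 * (real CARD('a) * (real CARD('a) * norm k)))"
    by (rule sum_mono) (rule ca)
  also have "\<dots> = 2 * real CARD('a) ^ 3 * norm k" by (simp add: power3_eq_cube)
  finally show ?thesis unfolding lam_def .
qed

lemma proj_bound:
  assumes irr: "irreducible_perm (ip::'a::finite perm_datum)" and card: "CARD('a) \<ge> 2"
  shows "norm (orth_proj (mat_kernel (Omega (fst (rv_iter ip v m)))) (rv_cocycle ip v m *v x))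
     \<le> 2 * real CARD('a) ^ 3 * norm x"
proof -
  define K where "K = mat_kernel (Omega (fst (rv_iter ip v m)))"
  define Z where "Z = rv_cocycle ip v m"
  define C where "C = 2 * real CARD('a) ^ 3"
  define k where "k = orth_proj K (Z *v x)"
  have P: "k \<in> K" "\<forall>w\<in>K. (Z *v x - k) \<bullet> w = 0" using proj_props[OF subspace_ker, of _ "Z *v x"] k_def K_def by auto
  have "k \<bullet> k = (Z *v x) \<bullet> k" using P by (simp add: inner_diff_left)
  also have "\<dots> = x \<bullet> (transpose Z *v k)" by (rule inner_mat)
  also have "\<dots> \<le> norm x * norm (transpose Z *v k)" by (rule norm_cauchy_schwarz)
  also have "\<dots> \<le> norm x * (C * norm k)"
    using ZT_bound[OF irr card, of k v m] P(1) unfolding K_def Z_def C_def by (simp add: mult_left_mono)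
  finally have h: "norm k * norm k \<le> C * norm x * norm k" by (simp add: power2_norm_eq_inner[symmetric] power2_eq_square algebra_simps)
  have "norm k \<le> C * norm x"
  proof (cases "norm k = 0")
    case True thus ?thesis unfolding C_def by simp
  next
    case False hence "norm k > 0" by simp
    thus ?thesis using h by (simp add: mult_le_cancel_right)
  qed
  thus ?thesis unfolding k_def K_def Z_def C_def .
qed

lemma return_id:
  assumes irr: "irreducible_perm (ip::'a::finite perm_datum)" and card: "CARD('a) \<ge> 2"
    and ret: "fst (rv_iter ip v m) = ip"
  shows "orth_proj (mat_kernel (Omega ip)) (rv_cocycle ip v m *v x) = orth_proj (mat_kernel (Omega ip)) x"
proof -
  define K where "K = mat_kernel (Omega ip)"
  define Z where "Z = rv_cocycle ip v m"
  have r0: "row_ok (fst ip)" and r1: "row_ok (snd ip)" using irr irreducible_perm_def by blast+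
  have fix_: "transpose Z *v w = w" if w: "w \<in> K" for w
  proof -
    have kw: "kc ip w" using w ker_char[OF r0 r1] unfolding K_def mat_kernel_def by blast
    define lam where "lam = transpose Z *v w"
    have ch: "kc ip lam" "\<And>a. PS (fst ip) lam (fst ip a) = PS (fst ip) w (fst ip a)"
      using chain[OF r0 r1, of v m w] kw ret lam_def Z_def by auto
    define d where "d = lam - w"
    have kd: "kc ip d" using ch(1) kw unfolding kc_def d_def PS_def by (simp add: sum_subtractf)
    have zd: "PS (fst ip) d (fst ip a) = 0" for a using ch(2)[of a] unfolding d_def PS_def by (simp add: sum_subtractf)
    have "\<bar>d$a\<bar> \<le> 0" for a using kc_bound[OF irr card kd, of a] zd by simp
    hence "d = 0" by (simp add: vec_eq_iff)
    thus ?thesis unfolding d_def lam_def by simp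
  qed
  have P: "orth_proj K x \<in> K" "\<forall>w\<in>K. (x - orth_proj K x) \<bullet> w = 0"
    using proj_props[OF subspace_ker, of _ x] K_def by auto
  have "\<forall>w\<in>K. (Z *v x - orth_proj K x) \<bullet> w = 0"
  proof
    fix w assume w: "w \<in> K"
    have "(Z *v x) \<bullet> w = x \<bullet> w" using inner_mat[of Z x w] fix_[OF w] by simp
    thus "(Z *v x - orth_proj K x) \<bullet> w = 0" using P(2) w by (simp add: inner_diff_left)
  qed
  hence "orth_proj K (Z *v x) = orth_proj K x"
    using proj_unique[OF _ P(1)] K_def subspace_ker by blast
  thus ?thesis unfolding K_def Z_def .
qed

theorem lemma6p3:
  assumes "CARD('a::finite) \<ge> 2"
  shows "\<exists>C>0. \<forall>ip :: 'a perm_datum. irreducible_perm ip \<longrightarrow>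
    (AE v in lborel. (\<forall>a. v $ a > 0) \<longrightarrow>
       (\<forall>n. onorm (\<lambda>x. orth_proj (mat_kernel (Omega (fst (zorich_iter ip v n))))
                              (zorich_cocycle ip v n *v x)) \<le> C) \<and>
       (\<forall>n. fst (zorich_iter ip v n) = ip \<longrightarrow>
          (\<forall>x. orth_proj (mat_kernel (Omega ip)) (zorich_cocycle ip v n *v x)
               = orth_proj (mat_kernel (Omega ip)) x)))"
proof (intro exI[of _ "2 * real CARD('a) ^ 3"] conjI allI impI)
  show "0 < 2 * real CARD('a) ^ 3" by simp
next
  fix ip :: "'a perm_datum" assume irr: "irreducible_perm ip"
  show "AE v in lborel. (\<forall>a. v $ a > 0) \<longrightarrow>
       (\<forall>n. onorm (\<lambda>x. orth_proj (mat_kernel (Omega (fst (zorich_iter ip v n))))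
                              (zorich_cocycle ip v n *v x)) \<le> 2 * real CARD('a) ^ 3) \<and>
       (\<forall>n. fst (zorich_iter ip v n) = ip \<longrightarrow>
          (\<forall>x. orth_proj (mat_kernel (Omega ip)) (zorich_cocycle ip v n *v x)
               = orth_proj (mat_kernel (Omega ip)) x))"
  proof (rule AE_I2, intro impI conjI allI)
    fix v :: "real^'a" and n
    show "onorm (\<lambda>x. orth_proj (mat_kernel (Omega (fst (zorich_iter ip v n))))
                              (zorich_cocycle ip v n *v x)) \<le> 2 * real CARD('a) ^ 3"
      unfolding zorich_iter_def zorich_cocycle_def
      by (rule onorm_le) (rule proj_bound[OF irr assms])
  next
    fix v :: "real^'a" and n x
    assume "fst (zorich_iter ip v n) = ip"
    thus "orth_proj (mat_kernel (Omega ip)) (zorich_cocycle ip v n *v x)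
               = orth_proj (mat_kernel (Omega ip)) x"
      unfolding zorich_iter_def zorich_cocycle_def by (rule return_id[OF irr assms])
  qed
qed
end
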